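(* For every $n\ge 1$ and every $i\in\{1,\dots,n-1\}$, $\mathrm{cap}_{\{i\},n}\circ\mathrm{j}_n=0=\mathrm{j}_n\circ\mathrm{cup}_{\{i\},n}$ in $\mathcal{TL}_0(\Bbbk)$. Equivalently, $\mathrm{j}_n$ is annihilated under both pre- and post-composition by the ideal spanned by Temperley–Lieb diagrams with fewer than $n$ through-strands.
   Context: $\Bbbk$ is a field. $\mathcal{TL}_0(\Bbbk)$ is the strict $\Bbbk$-linear monoidal category with objects $\mathbf 0,\mathbf 1,\dots$, $\mathbf m\otimes\mathbf n=\mathbf{m+n}$, generated by $\mathrm{cup}:\mathbf 0\to\mathbf 2$ and $\mathrm{cap}:\mathbf 2\to\mathbf 0$ subject to $(\mathrm{id}_{\mathbf 1}\otimes\mathrm{cap})\circ(\mathrm{cup}\otimes\mathrm{id}_{\mathbf 1})=0=(\mathrm{cap}\otimes\mathrm{id}_{\mathbf 1})\circ(\mathrm{id}_{\mathbf 1}\otimes\mathrm{cup})$ and $\mathrm{cap}\circ\mathrm{cup}=\mathrm{id}_{\mathbf 0}$. A Temperley–Lieb diagram is a nonzero morphism built from cup, cap and identities by $\otimes$ and $\circ$; its through-strands are the strands joining bottom to top. A subset $I\subseteq\{1,\dots,n\}$ is apt if $n\notin I$ and no two elements of $I$ are consecutive; $\mathrm{cap}_{I,n}:\mathbf n\to\mathbf{n-2|I|}$ has caps joining strands $i,i+1$ for $i\in I$ and through-strands elsewhere, $\mathrm{cup}_{I,n}$ is its vertical reflection (so $\mathrm{cap}_{\{i\},n}=\mathrm{id}_{\mathbf{i-1}}\otimes\mathrm{cap}\otimes\mathrm{id}_{\mathbf{n-i-1}}$,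 $\mathrm{cup}_{\{i\},n}=\mathrm{id}_{\mathbf{i-1}}\otimes\mathrm{cup}\otimes\mathrm{id}_{\mathbf{n-i-1}}$), and $\mathrm{j}_n=\sum_{I\text{ apt}}(-1)^{|I|}\mathrm{cup}_{I,n}\circ\mathrm{cap}_{I,n}$. *)

theory Defs
  imports Main
begin

text \<open>Formal expressions built from identities, cup, cap by composition and tensor
  product. TComp f g denotes f \<circ> g (g applied first).\<close>

datatype tl_expr = TId nat | TCup | TCap | TComp tl_expr tl_expr | TTens tl_expr tl_expr

inductive tl_wt :: "tl_expr \<Rightarrow> nat \<Rightarrow> nat \<Rightarrow> bool" where
  "tl_wt (TId n) n n"
| "tl_wt TCup 0 2"
| "tl_wt TCap 2 0"
| "tl_wt g a b \<Longrightarrow> tl_wt f b c \<Longrightarrow> tl_wt (TComp f g) a c"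
| "tl_wt f a b \<Longrightarrow> tl_wt g c d \<Longrightarrow> tl_wt (TTens f g) (a + c) (b + d)"

text \<open>Formal linear combinations of expressions (coefficients in a field).\<close>

definition tl_single :: "tl_expr \<Rightarrow> tl_expr \<Rightarrow> 'k::field" where
  "tl_single e = (\<lambda>x. if x = e then 1 else 0)"

definition tl_lcomp :: "(tl_expr \<Rightarrow> 'k::field) \<Rightarrow> (tl_expr \<Rightarrow> 'k) \<Rightarrow> tl_expr \<Rightarrow> 'k" where
  "tl_lcomp u v = (\<lambda>e. case e of TComp a b \<Rightarrow> u a * v b | _ \<Rightarrow> 0)"

definition tl_ltens :: "(tl_expr \<Rightarrow> 'k::field) \<Rightarrow> (tl_expr \<Rightarrow> 'k) \<Rightarrow> tl_expr \<Rightarrow> 'k" where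
  "tl_ltens u v = (\<lambda>e. case e of TTens a b \<Rightarrow> u a * v b | _ \<Rightarrow> 0)"

text \<open>tl_null a b v: the linear combination v of expressions a \<rightarrow> b lies in the
  two-sided tensor ideal generated by the axioms of a strict monoidal category and the
  defining relations of TL_0; i.e. v represents the zero morphism a \<rightarrow> b of TL_0(k).\<close>

inductive tl_null :: "nat \<Rightarrow> nat \<Rightarrow> (tl_expr \<Rightarrow> 'k::field) \<Rightarrow> bool" where
  zero: "tl_null a b (\<lambda>_. 0)"
| add: "tl_null a b u \<Longrightarrow> tl_null a b v \<Longrightarrow> tl_null a b (\<lambda>e. u e + v e)"
| smult: "tl_null a b v \<Longrightarrow> tl_null a b (\<lambda>e. c * v e)"
| comp_assoc: "tl_wt h a b \<Longrightarrow> tl_wt g b c \<Longrightarrow> tl_wt f c d \<Longrightarrow>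
    tl_null a d (\<lambda>x. tl_single (TComp (TComp f g) h) x - tl_single (TComp f (TComp g h)) x)"
| id_left: "tl_wt f a b \<Longrightarrow> tl_null a b (\<lambda>x. tl_single (TComp (TId b) f) x - tl_single f x)"
| id_right: "tl_wt f a b \<Longrightarrow> tl_null a b (\<lambda>x. tl_single (TComp f (TId a)) x - tl_single f x)"
| tens_assoc: "tl_wt f a b \<Longrightarrow> tl_wt g c d \<Longrightarrow> tl_wt h e k \<Longrightarrow>
    tl_null (a + c + e) (b + d + k)
      (\<lambda>x. tl_single (TTens (TTens f g) h) x - tl_single (TTens f (TTens g h)) x)"
| tens_unit_left: "tl_wt f a b \<Longrightarrow> tl_null a b (\<lambda>x. tl_single (TTens (TId 0) f) x - tl_single f x)"
| tens_unit_right: "tl_wt f a b \<Longrightarrow> tl_null a b (\<lambda>x. tl_single (TTens f (TId 0)) x - tl_single f x)"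
| tens_id: "tl_null (m + n) (m + n) (\<lambda>x. tl_single (TTens (TId m) (TId n)) x - tl_single (TId (m + n)) x)"
| interchange: "tl_wt g a b \<Longrightarrow> tl_wt f b c \<Longrightarrow> tl_wt k d e \<Longrightarrow> tl_wt h e l \<Longrightarrow>
    tl_null (a + d) (c + l)
      (\<lambda>x. tl_single (TComp (TTens f h) (TTens g k)) x - tl_single (TTens (TComp f g) (TComp h k)) x)"
| zigzag1: "tl_null 1 1 (tl_single (TComp (TTens (TId 1) TCap) (TTens TCup (TId 1))))"
| zigzag2: "tl_null 1 1 (tl_single (TComp (TTens TCap (TId 1)) (TTens (TId 1) TCup)))"
| circle: "tl_null 0 0 (\<lambda>x. tl_single (TComp TCap TCup) x - tl_single (TId 0) x)"
| comp_left: "tl_null a b v \<Longrightarrow> tl_wt f b c \<Longrightarrow> tl_null a c (tl_lcomp (tl_single f) v)"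
| comp_right: "tl_null a b v \<Longrightarrow> tl_wt g c a \<Longrightarrow> tl_null c b (tl_lcomp v (tl_single g))"
| tens_left: "tl_null a b v \<Longrightarrow> tl_wt f c d \<Longrightarrow> tl_null (c + a) (d + b) (tl_ltens (tl_single f) v)"
| tens_right: "tl_null a b v \<Longrightarrow> tl_wt f c d \<Longrightarrow> tl_null (a + c) (b + d) (tl_ltens v (tl_single f))"

text \<open>capx I k r: the tensor product over strands k, k+1, ... (r strands remaining) where a
  cap joins strands i, i+1 for i \<in> I and identities elsewhere.\<close>

fun capx :: "nat set \<Rightarrow> nat \<Rightarrow> nat \<Rightarrow> tl_expr" where
  "capx I k 0 = TId 0"
| "capx I k (Suc 0) = TTens (TId 1) (TId 0)"
| "capx I k (Suc (Suc r)) =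
     (if k \<in> I then TTens TCap (capx I (k + 2) r)
      else TTens (TId 1) (capx I (k + 1) (Suc r)))"

fun cupx :: "nat set \<Rightarrow> nat \<Rightarrow> nat \<Rightarrow> tl_expr" where
  "cupx I k 0 = TId 0"
| "cupx I k (Suc 0) = TTens (TId 1) (TId 0)"
| "cupx I k (Suc (Suc r)) =
     (if k \<in> I then TTens TCup (cupx I (k + 2) r)
      else TTens (TId 1) (cupx I (k + 1) (Suc r)))"

definition cap_I :: "nat set \<Rightarrow> nat \<Rightarrow> tl_expr" where
  "cap_I I n = capx I 1 n"

definition cup_I :: "nat set \<Rightarrow> nat \<Rightarrow> tl_expr" where
  "cup_I I n = cupx I 1 n"

definition apt :: "nat \<Rightarrow> nat set set" where
  "apt n = {I. I \<subseteq> {1..n} \<and> n \<notin> I \<and> (\<forall>i\<in>I. Suc i \<notin> I)}"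

definition jn :: "nat \<Rightarrow> tl_expr \<Rightarrow> 'k::field" where
  "jn n = (\<lambda>e. \<Sum>I\<in>apt n. if e = TComp (cup_I I n) (cap_I I n) then (-1) ^ card I else 0)"

end

theory Submission
  imports Defs
begin

fun dm :: "tl_expr \<Rightarrow> nat" where
  "dm (TId n) = n" | "dm TCup = 0" | "dm TCap = 2" | "dm (TComp f g) = dm g"
| "dm (TTens f g) = dm f + dm g"

fun cd :: "tl_expr \<Rightarrow> nat" where
  "cd (TId n) = n" | "cd TCup = 2" | "cd TCap = 0" | "cd (TComp f g) = cd f"
| "cd (TTens f g) = cd f + cd g"

lemma wt_dc: "tl_wt e a b \<Longrightarrow> dm e = a \<and> cd e = b"
  by (induction rule: tl_wt.induct) auto

definition wt :: "tl_expr \<Rightarrow> bool" where "wt e \<longleftrightarrow> tl_wt e (dm e) (cd e)"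

inductive_cases wtC: "tl_wt (TComp f g) a c"
inductive_cases wtT: "tl_wt (TTens f g) a c"

lemma wt_simps[simp]: "wt (TId n)" "wt TCup" "wt TCap"
  "wt (TComp f g) \<longleftrightarrow> wt f \<and> wt g \<and> dm f = cd g"
  "wt (TTens f g) \<longleftrightarrow> wt f \<and> wt g"
  unfolding wt_def
  by (auto intro: tl_wt.intros elim!: wtC wtT dest: wt_dc)

lemma wtI: "tl_wt e a b \<Longrightarrow> wt e"
  using wt_dc wt_def by blast

definition eqv :: "'k::field itself \<Rightarrow> tl_expr \<Rightarrow> tl_expr \<Rightarrow> bool" where
  "eqv K e e' \<longleftrightarrow> wt e \<and> wt e' \<and> dm e = dm e' \<and> cd e = cd e' \<and>
     tl_null (dm e) (cd e) (\<lambda>x. (tl_single e x :: 'k) - tl_single e' x)"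

definition nul :: "'k::field itself \<Rightarrow> tl_expr \<Rightarrow> bool" where
  "nul K e \<longleftrightarrow> wt e \<and> tl_null (dm e) (cd e) (tl_single e :: _ \<Rightarrow> 'k)"

lemma null_cong: "tl_null a b v \<Longrightarrow> v = w \<Longrightarrow> tl_null a b w" by simp

lemma eqv_wt: "eqv K e e' \<Longrightarrow> wt e \<and> wt e' \<and> dm e = dm e' \<and> cd e = cd e'"
  unfolding eqv_def by blast

lemma eqv_refl: "wt e \<Longrightarrow> eqv K e e"
  unfolding eqv_def by (auto intro: null_cong[OF tl_null.zero])

lemma eqv_sym: "eqv K e e' \<Longrightarrow> eqv K e' e"
  unfolding eqv_def
  apply (auto)
  apply (drule tl_null.smult[where c="-1"])
  apply (erule null_cong) apply (auto simp: fun_eq_iff algebra_simps)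
  done

lemma eqv_trans[trans]: "eqv K e e' \<Longrightarrow> eqv K e' e'' \<Longrightarrow> eqv K e e''"
  unfolding eqv_def
  apply (elim conjE)
  apply (intro conjI, simp_all)
  apply (rule null_cong, erule (1) tl_null.add[where u = "\<lambda>x. tl_single e x - tl_single e' x"])
  apply (auto simp: fun_eq_iff algebra_simps)
  done

lemma eqv_nul: "eqv K e e' \<Longrightarrow> nul K e' \<Longrightarrow> nul K e"
  unfolding eqv_def nul_def
  apply (elim conjE)
  apply (intro conjI, simp_all)
  apply (rule null_cong, erule (1) tl_null.add[where u = "\<lambda>x. tl_single e x - tl_single e' x"])
  apply (auto simp: fun_eq_iff algebra_simps)
  done

lemma lcomp_l: "tl_lcomp (tl_single f) (\<lambda>x. (tl_single e x :: 'k::field) - tl_single e' x)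
   = (\<lambda>x. tl_single (TComp f e) x - tl_single (TComp f e') x)"
  by (rule ext, case_tac x) (simp_all add: tl_lcomp_def tl_single_def)
lemma lcomp_r: "tl_lcomp (\<lambda>x. (tl_single e x :: 'k::field) - tl_single e' x) (tl_single g)
   = (\<lambda>x. tl_single (TComp e g) x - tl_single (TComp e' g) x)"
  by (rule ext, case_tac x) (simp_all add: tl_lcomp_def tl_single_def)
lemma ltens_l: "tl_ltens (tl_single f) (\<lambda>x. (tl_single e x :: 'k::field) - tl_single e' x)
   = (\<lambda>x. tl_single (TTens f e) x - tl_single (TTens f e') x)"
  by (rule ext, case_tac x) (simp_all add: tl_ltens_def tl_single_def)
lemma ltens_r: "tl_ltens (\<lambda>x. (tl_single e x :: 'k::field) - tl_single e' x) (tl_single g)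
   = (\<lambda>x. tl_single (TTens e g) x - tl_single (TTens e' g) x)"
  by (rule ext, case_tac x) (simp_all add: tl_ltens_def tl_single_def)
lemma lcomp_s: "tl_lcomp (tl_single f) (tl_single e) = (tl_single (TComp f e) :: _ \<Rightarrow> 'k::field)"
  by (rule ext, case_tac x) (simp_all add: tl_lcomp_def tl_single_def)
lemma ltens_s: "tl_ltens (tl_single f) (tl_single e) = (tl_single (TTens f e) :: _ \<Rightarrow> 'k::field)"
  by (rule ext, case_tac x) (simp_all add: tl_ltens_def tl_single_def)

lemma eqv_compL: "eqv K e e' \<Longrightarrow> wt f \<Longrightarrow> dm f = cd e \<Longrightarrow> eqv K (TComp f e) (TComp f e')"
  unfolding eqv_def
  apply auto
  apply (drule tl_null.comp_left[where f=f and c="cd f"]) apply (simp add: wt_def)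
  apply (simp add: lcomp_l)
  done

lemma eqv_compR: "eqv K e e' \<Longrightarrow> wt g \<Longrightarrow> cd g = dm e \<Longrightarrow> eqv K (TComp e g) (TComp e' g)"
  unfolding eqv_def
  apply auto
  apply (drule tl_null.comp_right[where g=g and c="dm g"]) apply (simp add: wt_def)
  apply (simp add: lcomp_r)
  done

lemma eqv_tensL: "eqv K e e' \<Longrightarrow> wt f \<Longrightarrow> eqv K (TTens f e) (TTens f e')"
  unfolding eqv_def
  apply auto
  apply (drule tl_null.tens_left[where f=f and c="dm f" and d = "cd f"]) apply (simp add: wt_def)
  apply (simp add: ltens_l)
  done

lemma eqv_tensR: "eqv K e e' \<Longrightarrow> wt f \<Longrightarrow> eqv K (TTens e f) (TTens e' f)"
  unfolding eqv_def
  apply auto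
  apply (drule tl_null.tens_right[where f=f and c="dm f" and d = "cd f"]) apply (simp add: wt_def)
  apply (simp add: ltens_r)
  done

lemma eqv_comp: "eqv K e e' \<Longrightarrow> eqv K f f' \<Longrightarrow> dm f = cd e \<Longrightarrow> eqv K (TComp f e) (TComp f' e')"
  apply (rule eqv_trans[OF eqv_compL[of K e e' f]])
  apply (auto dest: eqv_wt intro!: eqv_compR)
  done

lemma eqv_tens: "eqv K e e' \<Longrightarrow> eqv K f f' \<Longrightarrow> eqv K (TTens f e) (TTens f' e')"
  apply (rule eqv_trans[OF eqv_tensL[of K e e' f]])
  apply (auto dest: eqv_wt intro!: eqv_tensR)
  done

lemma nul_compL: "nul K e \<Longrightarrow> wt f \<Longrightarrow> dm f = cd e \<Longrightarrow> nul K (TComp f e)"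
  unfolding nul_def
  apply auto
  apply (drule tl_null.comp_left[where f=f and c="cd f"]) apply (simp add: wt_def)
  apply (simp add: lcomp_s)
  done

lemma nul_compR: "nul K e \<Longrightarrow> wt g \<Longrightarrow> cd g = dm e \<Longrightarrow> nul K (TComp e g)"
  unfolding nul_def
  apply auto
  apply (drule tl_null.comp_right[where g=g and c="dm g"]) apply (simp add: wt_def)
  apply (simp add: lcomp_s)
  done

lemma nul_tensL: "nul K e \<Longrightarrow> wt f \<Longrightarrow> nul K (TTens f e)"
  unfolding nul_def
  apply auto
  apply (drule tl_null.tens_left[where f=f and c="dm f" and d = "cd f"]) apply (simp add: wt_def)
  apply (simp add: ltens_s)
  done

lemma nul_tensR: "nul K e \<Longrightarrow> wt f \<Longrightarrow> nul K (TTens e f)"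
  unfolding nul_def
  apply auto
  apply (drule tl_null.tens_right[where f=f and c="dm f" and d = "cd f"]) apply (simp add: wt_def)
  apply (simp add: ltens_s)
  done

lemma wtD: "wt e \<Longrightarrow> tl_wt e (dm e) (cd e)" by (simp add: wt_def)

lemma eqv_assoc: "wt f \<Longrightarrow> wt g \<Longrightarrow> wt h \<Longrightarrow> dm f = cd g \<Longrightarrow> dm g = cd h \<Longrightarrow>
  eqv K (TComp (TComp f g) h) (TComp f (TComp g h))"
  unfolding eqv_def using tl_null.comp_assoc[of h "dm h" "cd h" g "cd g" f "cd f"] wtD[of f] wtD[of g] wtD[of h] by auto

lemma eqv_idl: "wt f \<Longrightarrow> eqv K (TComp (TId (cd f)) f) f"
  unfolding eqv_def using tl_null.id_left[OF wtD, of f] by auto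

lemma eqv_idr: "wt f \<Longrightarrow> eqv K (TComp f (TId (dm f))) f"
  unfolding eqv_def using tl_null.id_right[OF wtD, of f] by auto

lemma eqv_tassoc: "wt f \<Longrightarrow> wt g \<Longrightarrow> wt h \<Longrightarrow>
  eqv K (TTens (TTens f g) h) (TTens f (TTens g h))"
  unfolding eqv_def using tl_null.tens_assoc[OF wtD wtD wtD, of f g h] by (auto simp: add.assoc)

lemma eqv_unitl: "wt f \<Longrightarrow> eqv K (TTens (TId 0) f) f"
  unfolding eqv_def using tl_null.tens_unit_left[OF wtD, of f] by auto

lemma eqv_unitr: "wt f \<Longrightarrow> eqv K (TTens f (TId 0)) f"
  unfolding eqv_def using tl_null.tens_unit_right[OF wtD, of f] by auto

lemma eqv_tid: "eqv K (TTens (TId m) (TId n)) (TId (m + n))"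
  unfolding eqv_def using tl_null.tens_id[of m n] by auto

lemma eqv_inter: "wt f \<Longrightarrow> wt g \<Longrightarrow> wt h \<Longrightarrow> wt k \<Longrightarrow> dm f = cd g \<Longrightarrow> dm h = cd k \<Longrightarrow>
  eqv K (TComp (TTens f h) (TTens g k)) (TTens (TComp f g) (TComp h k))"
  unfolding eqv_def using tl_null.interchange[of g "dm g" "cd g" f "cd f" k "dm k" "cd k" h "cd h"] wtD[of f] wtD[of g] wtD[of h] wtD[of k] by auto

lemma eqv_circle: "eqv K (TComp TCap TCup) (TId 0)"
  unfolding eqv_def using tl_null.circle by auto

lemma nul_z1: "nul K (TComp (TTens (TId 1) TCap) (TTens TCup (TId 1)))"
  unfolding nul_def using tl_null.zigzag1 by auto

lemma nul_z2: "nul K (TComp (TTens TCap (TId 1)) (TTens (TId 1) TCup))"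
  unfolding nul_def using tl_null.zigzag2 by auto


fun tlist :: "tl_expr list \<Rightarrow> tl_expr" where
  "tlist [] = TId 0" | "tlist (g # gs) = TTens g (tlist gs)"

abbreviation rep :: "nat \<Rightarrow> tl_expr list" where "rep a \<equiv> replicate a (TId (Suc 0))"

definition gens :: "tl_expr list \<Rightarrow> bool" where "gens xs \<longleftrightarrow> (\<forall>g\<in>set xs. wt g)"

lemma gens_simps[simp]: "gens []" "gens (g # xs) \<longleftrightarrow> wt g \<and> gens xs"
  "gens (xs @ ys) \<longleftrightarrow> gens xs \<and> gens ys" "gens (rep a)"
  by (auto simp: gens_def)

lemma wt_tlist[simp]: "wt (tlist xs) \<longleftrightarrow> gens xs" by (induct xs) auto
lemma dm_tlist_app[simp]: "dm (tlist (xs @ ys)) = dm (tlist xs) + dm (tlist ys)" by (induct xs) auto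
lemma cd_tlist_app[simp]: "cd (tlist (xs @ ys)) = cd (tlist xs) + cd (tlist ys)" by (induct xs) auto
lemma dm_rep[simp]: "dm (tlist (rep a)) = a" by (induct a) auto
lemma cd_rep[simp]: "cd (tlist (rep a)) = a" by (induct a) auto

lemma eqv_app: "gens xs \<Longrightarrow> gens ys \<Longrightarrow> eqv K (tlist (xs @ ys)) (TTens (tlist xs) (tlist ys))"
proof (induct xs)
  case Nil
  then show ?case using eqv_sym[OF eqv_unitl[of "tlist ys" K]] by simp
next
  case (Cons g xs)
  have "eqv K (TTens g (tlist (xs @ ys))) (TTens g (TTens (tlist xs) (tlist ys)))"
    using Cons by (intro eqv_tensL) simp_all
  also have "eqv K (TTens g (TTens (tlist xs) (tlist ys))) (TTens (TTens g (tlist xs)) (tlist ys))"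
    using Cons by (intro eqv_sym[OF eqv_tassoc]) simp_all
  finally show ?case by simp
qed

lemma eqv_rep: "eqv K (tlist (rep a)) (TId a)"
proof (induct a)
  case 0 then show ?case by (simp add: eqv_refl)
next
  case (Suc a)
  have "eqv K (TTens (TId 1) (tlist (rep a))) (TTens (TId 1) (TId a))"
    using Suc by (intro eqv_tensL) simp_all
  also have "eqv K (TTens (TId 1) (TId a)) (TId (Suc a))" using eqv_tid[of K 1 a] by simp
  finally show ?case by simp
qed

lemma eqv_app3: "gens xs \<Longrightarrow> gens M \<Longrightarrow> gens ys \<Longrightarrow>
  eqv K (tlist (xs @ M @ ys)) (TTens (tlist xs) (TTens (tlist M) (tlist ys)))"
  by (rule eqv_trans[OF eqv_app eqv_tensL[OF eqv_app]]) simp_all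

lemma eqv_app3_rep: "gens M \<Longrightarrow>
  eqv K (tlist (rep a @ M @ rep b)) (TTens (TId a) (TTens (tlist M) (TId b)))"
  apply (rule eqv_trans[OF eqv_app3])
  apply (simp_all)
  apply (intro eqv_tens eqv_rep eqv_refl)
  apply simp
  done

lemma eqv_one: "wt g \<Longrightarrow> eqv K (tlist [g]) g"
  using eqv_unitr[of g K] by simp

lemma eqv_two: "wt g \<Longrightarrow> wt h \<Longrightarrow> eqv K (tlist [g, h]) (TTens g h)"
  using eqv_tensL[OF eqv_unitr[of h K], of g] by simp

lemma eqv_mid: "gens xs \<Longrightarrow> wt g \<Longrightarrow> gens ys \<Longrightarrow>
  eqv K (tlist (xs @ g # ys)) (TTens (tlist xs) (TTens g (tlist ys)))"
  using eqv_app[of xs "g # ys" K] by simp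

lemma eqv_mid_rep: "wt g \<Longrightarrow>
  eqv K (tlist (rep a @ g # rep b)) (TTens (TId a) (TTens g (TId b)))"
  using eqv_trans[OF eqv_app3_rep[of "[g]" K a b] eqv_tensL[OF eqv_tensR[OF eqv_one]]]
  by simp

lemma eqv_mid2: "gens xs \<Longrightarrow> wt g \<Longrightarrow> wt h \<Longrightarrow> gens ys \<Longrightarrow>
  eqv K (tlist (xs @ g # h # ys)) (TTens (tlist xs) (TTens (TTens g h) (tlist ys)))"
  using eqv_trans[OF eqv_app3[of xs "[g,h]" ys K] eqv_tensL[OF eqv_tensR[OF eqv_two]]]
  by simp

lemma eqv_mid2_rep: "wt g \<Longrightarrow> wt h \<Longrightarrow>
  eqv K (tlist (rep a @ g # h # rep b)) (TTens (TId a) (TTens (TTens g h) (TId b)))"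
  using eqv_trans[OF eqv_app3_rep[of "[g,h]" K a b] eqv_tensL[OF eqv_tensR[OF eqv_two]]]
  by simp

lemma LOC: "wt X1 \<Longrightarrow> wt X2 \<Longrightarrow> wt P \<Longrightarrow> wt Q \<Longrightarrow> dm P = cd Q \<Longrightarrow>
  eqv K (TComp (TTens (TId (cd X1)) (TTens P (TId (cd X2)))) (TTens X1 (TTens Q X2)))
        (TTens X1 (TTens (TComp P Q) X2))"
  apply (rule eqv_trans[OF eqv_inter])
  apply (simp_all)
  apply (rule eqv_tens[OF eqv_trans[OF eqv_inter eqv_tensL[OF eqv_idl]] eqv_idl])
  apply simp_all
  done

lemma LOC': "wt X1 \<Longrightarrow> wt X2 \<Longrightarrow> wt P \<Longrightarrow> wt Q \<Longrightarrow> dm P = cd Q \<Longrightarrow>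
  eqv K (TComp (TTens X1 (TTens P X2)) (TTens (TId (dm X1)) (TTens Q (TId (dm X2)))))
        (TTens X1 (TTens (TComp P Q) X2))"
  apply (rule eqv_trans[OF eqv_inter])
  apply (simp_all)
  apply (rule eqv_tens[OF eqv_trans[OF eqv_inter eqv_tensL[OF eqv_idr]] eqv_idr])
  apply simp_all
  done


lemma circ: "gens xs \<Longrightarrow> gens ys \<Longrightarrow>
  eqv K (TComp (tlist (rep (cd (tlist xs)) @ TCap # rep (cd (tlist ys)))) (tlist (xs @ TCup # ys)))
        (tlist (xs @ ys))"
proof -
  assume a: "gens xs" "gens ys"
  let ?X = "tlist xs" and ?Y = "tlist ys"
  have "eqv K (TComp (tlist (rep (cd ?X) @ TCap # rep (cd ?Y))) (tlist (xs @ TCup # ys)))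
     (TComp (TTens (TId (cd ?X)) (TTens TCap (TId (cd ?Y)))) (TTens ?X (TTens TCup ?Y)))"
    using a by (intro eqv_comp eqv_mid eqv_mid_rep) simp_all
  also have "eqv K ... (TTens ?X (TTens (TComp TCap TCup) ?Y))"
    using a by (intro LOC) simp_all
  also have "eqv K ... (TTens ?X (TTens (TId 0) ?Y))"
    using a by (intro eqv_tensL eqv_tensR eqv_circle) simp_all
  also have "eqv K ... (TTens ?X ?Y)"
    using a by (intro eqv_tensL eqv_unitl) simp_all
  also have "eqv K ... (tlist (xs @ ys))"
    using a by (intro eqv_sym[OF eqv_app]) simp_all
  finally show ?thesis .
qed

lemma capmid: "gens xs \<Longrightarrow> gens ys \<Longrightarrow>
  eqv K (TComp (tlist (rep (cd (tlist xs)) @ TCap # rep (cd (tlist ys))))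
               (tlist (xs @ TId (Suc 0) # TId (Suc 0) # ys)))
        (TTens (tlist xs) (TTens TCap (tlist ys)))"
proof -
  assume a: "gens xs" "gens ys"
  let ?X = "tlist xs" and ?Y = "tlist ys"
  have "eqv K (TComp (tlist (rep (cd ?X) @ TCap # rep (cd ?Y))) (tlist (xs @ TId (Suc 0) # TId (Suc 0) # ys)))
     (TComp (TTens (TId (cd ?X)) (TTens TCap (TId (cd ?Y)))) (TTens ?X (TTens (TTens (TId (Suc 0)) (TId (Suc 0))) ?Y)))"
    using a by (intro eqv_comp eqv_mid2 eqv_mid_rep) simp_all
  also have "eqv K ... (TTens ?X (TTens (TComp TCap (TTens (TId (Suc 0)) (TId (Suc 0)))) ?Y))"
    using a by (intro LOC) simp_all
  also have "eqv K ... (TTens ?X (TTens TCap ?Y))"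
  proof -
    have "eqv K (TTens (TId (Suc 0)) (TId (Suc 0))) (TId 2)" using eqv_tid[of K "Suc 0" "Suc 0"] by (simp add: numeral_2_eq_2)
    then have "eqv K (TComp TCap (TTens (TId (Suc 0)) (TId (Suc 0)))) (TComp TCap (TId 2))"
      by (intro eqv_compL) simp_all
    also have "eqv K (TComp TCap (TId 2)) TCap" using eqv_idr[of TCap K] by simp
    finally show ?thesis using a by (intro eqv_tensL eqv_tensR) simp_all
  qed
  finally show ?thesis .
qed

lemma capfac: "gens xs \<Longrightarrow> gens ys \<Longrightarrow>
  eqv K (TComp (tlist (rep (cd (tlist xs)) @ TCap # rep (cd (tlist ys))))
               (tlist (xs @ TId (Suc 0) # TId (Suc 0) # ys)))
        (tlist (xs @ TCap # ys))"
  by (rule eqv_trans[OF capmid eqv_sym[OF eqv_mid]]) simp_all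

lemma capcomm: "gens xs \<Longrightarrow> gens ys \<Longrightarrow>
  eqv K (TComp (tlist (rep (cd (tlist xs)) @ TCap # rep (cd (tlist ys))))
               (tlist (xs @ TId (Suc 0) # TId (Suc 0) # ys)))
        (TComp (tlist (xs @ ys)) (tlist (rep (dm (tlist xs)) @ TCap # rep (dm (tlist ys)))))"
proof -
  assume a: "gens xs" "gens ys"
  let ?X = "tlist xs" and ?Y = "tlist ys"
  have "eqv K (TComp (tlist (xs @ ys)) (tlist (rep (dm ?X) @ TCap # rep (dm ?Y))))
     (TComp (TTens ?X (TTens (TId 0) ?Y)) (TTens (TId (dm ?X)) (TTens TCap (TId (dm ?Y)))))"
    using a by (intro eqv_comp eqv_mid_rep eqv_trans[OF eqv_app eqv_tensL[OF eqv_sym[OF eqv_unitl]]]) simp_all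
  also have "eqv K ... (TTens ?X (TTens (TComp (TId 0) TCap) ?Y))"
    using a by (intro LOC') simp_all
  also have "eqv K ... (TTens ?X (TTens TCap ?Y))"
    using a eqv_idl[of TCap K] by (intro eqv_tensL eqv_tensR) simp_all
  finally show ?thesis using a by (intro eqv_trans[OF capmid eqv_sym]) simp_all
qed

lemma cupfac: "gens xs \<Longrightarrow> gens ys \<Longrightarrow>
  eqv K (tlist (xs @ TCup # ys))
        (TComp (tlist (rep (cd (tlist xs)) @ TCup # rep (cd (tlist ys)))) (tlist (xs @ ys)))"
proof -
  assume a: "gens xs" "gens ys"
  let ?X = "tlist xs" and ?Y = "tlist ys"
  have "eqv K (TComp (tlist (rep (cd ?X) @ TCup # rep (cd ?Y))) (tlist (xs @ ys)))
     (TComp (TTens (TId (cd ?X)) (TTens TCup (TId (cd ?Y)))) (TTens ?X (TTens (TId 0) ?Y)))"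
    using a by (intro eqv_comp eqv_mid_rep eqv_trans[OF eqv_app eqv_tensL[OF eqv_sym[OF eqv_unitl]]]) simp_all
  also have "eqv K ... (TTens ?X (TTens (TComp TCup (TId 0)) ?Y))"
    using a by (intro LOC) simp_all
  also have "eqv K ... (TTens ?X (TTens TCup ?Y))"
    using a eqv_idr[of TCup K] by (intro eqv_tensL eqv_tensR) simp_all
  finally show ?thesis using a by (intro eqv_trans[OF eqv_mid eqv_sym]) simp_all
qed

lemma zig1: "nul K (TComp (tlist (rep a @ TId (Suc 0) # TCap # rep b)) (tlist (rep a @ TCup # TId (Suc 0) # rep b)))"
proof -
  have "eqv K (TComp (tlist (rep a @ TId (Suc 0) # TCap # rep b)) (tlist (rep a @ TCup # TId (Suc 0) # rep b)))
    (TComp (TTens (TId a) (TTens (TTens (TId (Suc 0)) TCap) (TId b))) (TTens (TId a) (TTens (TTens TCup (TId (Suc 0))) (TId b))))"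
    by (intro eqv_comp eqv_mid2_rep) simp_all
  also have "eqv K ... (TTens (TId a) (TTens (TComp (TTens (TId (Suc 0)) TCap) (TTens TCup (TId (Suc 0)))) (TId b)))"
    using LOC[of "TId a" "TId b" "TTens (TId (Suc 0)) TCap" "TTens TCup (TId (Suc 0))" K] by simp
  finally show ?thesis
    by (rule eqv_nul) (intro nul_tensL nul_tensR, insert nul_z1[of K], simp_all)
qed

lemma zig2: "nul K (TComp (tlist (rep a @ TCap # TId (Suc 0) # rep b)) (tlist (rep a @ TId (Suc 0) # TCup # rep b)))"
proof -
  have "eqv K (TComp (tlist (rep a @ TCap # TId (Suc 0) # rep b)) (tlist (rep a @ TId (Suc 0) # TCup # rep b)))
    (TComp (TTens (TId a) (TTens (TTens TCap (TId (Suc 0))) (TId b))) (TTens (TId a) (TTens (TTens (TId (Suc 0)) TCup) (TId b))))"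
    by (intro eqv_comp eqv_mid2_rep) simp_all
  also have "eqv K ... (TTens (TId a) (TTens (TComp (TTens TCap (TId (Suc 0))) (TTens (TId (Suc 0)) TCup)) (TId b)))"
    using LOC[of "TId a" "TId b" "TTens TCap (TId (Suc 0))" "TTens (TId (Suc 0)) TCup" K] by simp
  finally show ?thesis
    by (rule eqv_nul) (intro nul_tensL nul_tensR, insert nul_z2[of K], simp_all)
qed


fun shp :: "nat set \<Rightarrow> nat \<Rightarrow> nat \<Rightarrow> bool list" where
  "shp I k 0 = []"
| "shp I k (Suc 0) = [False]"
| "shp I k (Suc (Suc r)) = (if k \<in> I then True # shp I (k + 2) r else False # shp I (k + 1) (Suc r))"

definition gen :: "tl_expr \<Rightarrow> bool \<Rightarrow> tl_expr" where
  "gen G b = (if b then G else TId (Suc 0))"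

lemma gen_simps[simp]: "gen G True = G" "gen G False = TId (Suc 0)"
  by (simp_all add: gen_def)

lemma map_gen_rep[simp]: "map (gen G) (replicate r False) = rep r" by (induct r) auto

lemma capx_shp: "capx I k r = tlist (map (gen TCap) (shp I k r))"
  by (induct I k r rule: capx.induct) auto
lemma cupx_shp: "cupx I k r = tlist (map (gen TCup) (shp I k r))"
  by (induct I k r rule: cupx.induct) auto

lemma gens_map[simp]: "wt G \<Longrightarrow> gens (map (gen G) s)"
  by (induct s) (auto simp: gen_def)

lemma cd_cup_shp[simp]: "cd (tlist (map (gen TCup) (shp I k r))) = r"
  by (induct I k r rule: shp.induct) auto
lemma dm_cap_shp[simp]: "dm (tlist (map (gen TCap) (shp I k r))) = r"
  by (induct I k r rule: shp.induct) auto
lemma cd_cap_dm_cup[simp]: "cd (tlist (map (gen TCap) s)) = dm (tlist (map (gen TCup) s))"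
  by (induct s) (auto simp: gen_def)

lemma shp_split: "a = 0 \<or> k + a - 1 \<notin> I \<Longrightarrow> shp I k (a + b) = shp I k a @ shp I (k + a) b"
proof (induct I k a arbitrary: b rule: shp.induct)
  case (1 I k)
  then show ?case by simp
next
  case (2 I k)
  then show ?case by (cases b) auto
next
  case (3 I k r)
  have e: "Suc (Suc r) + b = Suc (Suc (r + b))" by simp
  show ?case
  proof (cases "k \<in> I")
    case True
    have "shp I (k + 2) (r + b) = shp I (k + 2) r @ shp I (k + 2 + r) b"
      using 3(3) True by (intro 3(1)) auto
    then show ?thesis using True by (simp only: e shp.simps) (simp add: add.assoc)
  next
    case False
    have "shp I (k + 1) (Suc r + b) = shp I (k + 1) (Suc r) @ shp I (k + 1 + Suc r) b"
      using 3(3) False by (intro 3(2)) auto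
    then show ?thesis using False by (simp only: e shp.simps) simp
  qed
qed

lemma shp_local: "(\<forall>p. k \<le> p \<and> p < k + r \<longrightarrow> (p \<in> I \<longleftrightarrow> p \<in> J)) \<Longrightarrow> shp I k r = shp J k r"
  by (induct I k r rule: shp.induct) auto

lemma shp_rep: "(\<forall>p. k \<le> p \<and> p < k + r \<longrightarrow> p \<notin> I) \<Longrightarrow> shp I k r = replicate r False"
  by (induct I k r rule: shp.induct) auto

lemma shp_F: assumes "p \<notin> I" "r \<ge> 1" shows "shp I p r = False # shp I (p + 1) (r - 1)"
proof -
  obtain r' where "r = Suc r'" using assms by (cases r) auto
  then show ?thesis using assms by (cases r') auto
qed

lemma shp_T: assumes "p \<in> I" "r \<ge> 2" shows "shp I p r = True # shp I (p + 2) (r - 2)"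
proof -
  obtain r' where "r = Suc (Suc r')" using assms by (metis add_2_eq_Suc le_Suc_ex)
  then show ?thesis using assms by auto
qed

abbreviation gu :: "bool list \<Rightarrow> tl_expr list" where "gu \<equiv> map (gen TCup)"
abbreviation gc :: "bool list \<Rightarrow> tl_expr list" where "gc \<equiv> map (gen TCap)"

lemma caseA_gen: "eqv K (TComp (tlist (rep (cd (tlist (gu L))) @ TCap # rep (cd (tlist (gu R)))))
    (tlist (gu (L @ True # R)))) (tlist (gu L @ gu R))"
  using circ[of "gu L" "gu R" K] by simp


lemma caseC_gen:
  fixes L R :: "bool list"
  defines "CI \<equiv> tlist (rep (cd (tlist (gu L))) @ TCap # rep (cd (tlist (gu R))))"
  shows "eqv K (TComp CI (TComp (tlist (gu L @ TId (Suc 0) # TId (Suc 0) # gu R))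
                                 (tlist (gc L @ TId (Suc 0) # TId (Suc 0) # gc R))))
               (TComp CI (TComp (tlist (gu L @ TCup # gu R)) (tlist (gc L @ TCap # gc R))))"
proof -
  let ?cupI = "tlist (gu L @ TId (Suc 0) # TId (Suc 0) # gu R)"
  let ?capI = "tlist (gc L @ TId (Suc 0) # TId (Suc 0) # gc R)"
  let ?cupJ = "tlist (gu L @ TCup # gu R)"
  let ?capJ = "tlist (gc L @ TCap # gc R)"
  let ?Y = "tlist (gu L @ gu R)"
  let ?C' = "tlist (rep (dm (tlist (gu L))) @ TCap # rep (dm (tlist (gu R))))"
  have "eqv K (TComp CI (TComp ?cupI ?capI)) (TComp (TComp CI ?cupI) ?capI)"
    unfolding CI_def by (intro eqv_sym[OF eqv_assoc]) simp_all
  also have "eqv K ... (TComp (TComp ?Y ?C') ?capI)"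
    unfolding CI_def by (intro eqv_compR capcomm) simp_all
  also have "eqv K ... (TComp ?Y (TComp ?C' ?capI))"
    by (intro eqv_assoc) simp_all
  also have "eqv K ... (TComp ?Y ?capJ)"
    using capfac[of "gc L" "gc R" K] by (intro eqv_compL) simp_all
  also have "eqv K ... (TComp (TComp CI ?cupJ) ?capJ)"
    unfolding CI_def using caseA_gen[of K L R] by (intro eqv_sym[OF eqv_compR]) simp_all
  also have "eqv K ... (TComp CI (TComp ?cupJ ?capJ))"
    unfolding CI_def by (intro eqv_assoc) simp_all
  finally show ?thesis .
qed

lemma caseB_gen:
  assumes "nul K (TComp C (tlist (rep (cd (tlist (gu L))) @ TCup # rep (cd (tlist (gu R))))))"
  shows "nul K (TComp C (TComp (tlist (gu L @ TCup # gu R)) (tlist (gc L @ TCap # gc R))))"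
proof -
  let ?U = "tlist (rep (cd (tlist (gu L))) @ TCup # rep (cd (tlist (gu R))))"
  let ?W = "tlist (gu L @ gu R)"
  let ?cupI = "tlist (gu L @ TCup # gu R)"
  let ?capI = "tlist (gc L @ TCap # gc R)"
  have w: "wt C" "dm C = cd ?U" using assms unfolding nul_def by auto
  have "eqv K (TComp C (TComp ?cupI ?capI)) (TComp C (TComp (TComp ?U ?W) ?capI))"
    using w cupfac[of "gu L" "gu R" K] by (intro eqv_compL eqv_compR) simp_all
  also have "eqv K ... (TComp C (TComp ?U (TComp ?W ?capI)))"
    using w by (intro eqv_compL eqv_assoc) simp_all
  also have "eqv K ... (TComp (TComp C ?U) (TComp ?W ?capI))"
    using w by (intro eqv_sym[OF eqv_assoc]) simp_all
  finally show ?thesis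
    by (rule eqv_nul) (rule nul_compR[OF assms], simp_all)
qed


lemma rep_snoc: "rep (Suc k) = rep k @ [TId (Suc 0)]"
  by (simp add: replicate_append_same)

lemma shp_split1: "a \<le> n \<Longrightarrow> a = 0 \<or> a \<notin> I \<Longrightarrow> shp I 1 n = shp I 1 a @ shp I (Suc a) (n - a)"
  using shp_split[of a 1 I "n - a"] by simp

lemma capi_shape: assumes "1 \<le> i" "i < n"
  shows "cap_I {i} n = tlist (rep (i - 1) @ TCap # rep (n - i - 1))"
proof -
  have pre: "i - 1 \<le> n" "i - 1 = 0 \<or> i - 1 \<notin> {i}" using assms by auto
  have "shp {i} 1 n = shp {i} 1 (i - 1) @ shp {i} i (n - (i - 1))"
    using shp_split1[OF pre] assms by simp
  also have "shp {i} 1 (i - 1) = replicate (i - 1) False" by (rule shp_rep) auto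
  also have "shp {i} i (n - (i - 1)) = True # shp {i} (i + 2) (n - i - 1)"
    using shp_T[of i "{i}" "n - (i - 1)"] assms by simp
  also have "shp {i} (i + 2) (n - i - 1) = replicate (n - i - 1) False" by (rule shp_rep) auto
  finally show ?thesis by (simp add: cap_I_def capx_shp)
qed

lemma aptD: "I \<in> apt n \<Longrightarrow> I \<subseteq> {1..n} \<and> n \<notin> I \<and> (\<forall>j\<in>I. Suc j \<notin> I)"
  by (simp add: apt_def)

definition TT :: "nat \<Rightarrow> nat \<Rightarrow> nat set \<Rightarrow> tl_expr" where
  "TT n i I = TComp (cap_I {i} n) (TComp (cup_I I n) (cap_I I n))"

lemma shapeA: assumes "1 \<le> i" "i < n" "i \<in> J" "i - 1 = 0 \<or> i - 1 \<notin> J"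
  shows "shp J 1 n = shp J 1 (i - 1) @ True # shp J (i + 2) (n - i - 1)"
proof -
  have pre: "i - 1 \<le> n" "i - 1 = 0 \<or> i - 1 \<notin> J" using assms by auto
  have "shp J 1 n = shp J 1 (i - 1) @ shp J i (n - (i - 1))"
    using shp_split1[OF pre] assms by simp
  also have "shp J i (n - (i - 1)) = True # shp J (i + 2) (n - i - 1)"
    using shp_T[of i J "n - (i - 1)"] assms by simp
  finally show ?thesis .
qed

lemma caseB2: assumes "1 \<le> i" "i < n" "I \<in> apt n" "i \<notin> I" "i + 1 \<in> I"
  shows "nul K (TT n i I)"
proof -
  have "i + 1 \<le> n" "i + 1 \<noteq> n" using aptD[OF assms(3)] assms(5) by auto
  then have i2: "i + 2 \<le> n" by simp
  have "shp I 1 n = shp I 1 i @ shp I (Suc i) (n - i)"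
    using shp_split1[of i n I] assms by simp
  also have "shp I (Suc i) (n - i) = True # shp I (Suc (Suc (Suc i))) (n - i - 2)"
    using shp_T[of "Suc i" I "n - i"] assms i2 by (simp add: eval_nat_numeral)
  finally have sh: "shp I 1 n = shp I 1 i @ True # shp I (Suc (Suc (Suc i))) (n - i - 2)" .
  have ci: "cap_I {i} n = tlist (rep (i - 1) @ TCap # TId (Suc 0) # rep (n - i - 2))"
  proof -
    have "n - i - 1 = Suc (n - i - 2)" using i2 by simp
    then show ?thesis using capi_shape[OF assms(1,2)] by simp
  qed
  have "rep i = rep (i - 1) @ [TId (Suc 0)]" using assms(1) rep_snoc[of "i - 1"] by simp
  then have z: "nul K (TComp (cap_I {i} n) (tlist (rep (cd (tlist (gu (shp I 1 i)))) @ TCup #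
      rep (cd (tlist (gu (shp I (Suc (Suc (Suc i))) (n - i - 2))))))))"
    using zig2[of K "i - 1" "n - i - 2"] ci by simp
  show ?thesis unfolding TT_def cup_I_def cap_I_def[of I] cupx_shp capx_shp sh
    using caseB_gen[OF z] by simp
qed

lemma caseB1: assumes "2 \<le> i" "i < n" "I \<in> apt n" "i - 1 \<in> I"
  shows "nul K (TT n i I)"
proof -
  have s2: "Suc (i - 2) = i - 1" using assms(1) by simp
  have i2: "i - 2 = 0 \<or> i - 2 \<notin> I"
  proof (rule disjI2, rule notI)
    assume "i - 2 \<in> I"
    then have "Suc (i - 2) \<notin> I" using aptD[OF assms(3)] by blast
    then show False using s2 assms(4) by simp
  qed
  have "shp I 1 n = shp I 1 (i - 2) @ shp I (Suc (i - 2)) (n - (i - 2))"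
    using shp_split1[of "i - 2" n I] assms i2 by simp
  also have "shp I (Suc (i - 2)) (n - (i - 2)) = True # shp I (i + 1) (n - i)"
    using shp_T[of "Suc (i - 2)" I "n - (i - 2)"] assms
    by (simp add: Suc_diff_Suc numeral_2_eq_2)
  finally have sh: "shp I 1 n = shp I 1 (i - 2) @ True # shp I (i + 1) (n - i)" .
  have ci: "cap_I {i} n = tlist (rep (i - 2) @ TId (Suc 0) # TCap # rep (n - i - 1))"
  proof -
    have "rep (i - 1) = rep (i - 2) @ [TId (Suc 0)]" using assms(1) rep_snoc[of "i - 2"]
      by (simp add: Suc_diff_Suc numeral_2_eq_2)
    then show ?thesis using capi_shape[of i n] assms by simp
  qed
  have "n - i = Suc (n - i - 1)" using assms(2) by simp
  then have "rep (n - i) = TId (Suc 0) # rep (n - i - 1)" by (metis replicate_Suc)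
  then have z: "nul K (TComp (cap_I {i} n) (tlist (rep (cd (tlist (gu (shp I 1 (i - 2))))) @ TCup #
      rep (cd (tlist (gu (shp I (i + 1) (n - i))))))))"
    using zig1[of K "i - 2" "n - i - 1"] ci by simp
  show ?thesis unfolding TT_def cup_I_def cap_I_def[of I] cupx_shp capx_shp sh
    using caseB_gen[OF z] by simp
qed

lemma caseC: assumes "1 \<le> i" "i < n" "I \<in> apt n" "i \<notin> I" "i + 1 \<notin> I" "i - 1 = 0 \<or> i - 1 \<notin> I"
  shows "eqv K (TT n i I) (TT n i (insert i I))"
proof -
  let ?J = "insert i I"
  have pre1: "i - 1 \<le> n" "i - 1 = 0 \<or> i - 1 \<notin> I" using assms by auto
  have "shp I 1 n = shp I 1 (i - 1) @ shp I i (n - (i - 1))"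
    using shp_split1[OF pre1] assms by simp
  also have "shp I i (n - (i - 1)) = False # False # shp I (i + 2) (n - i - 1)"
    using shp_F[of i I "n - (i - 1)"] shp_F[of "i + 1" I "n - i"] assms
    by (simp add: Suc_diff_le)
  finally have shI: "shp I 1 n = shp I 1 (i - 1) @ False # False # shp I (i + 2) (n - i - 1)" .
  have pre: "i - 1 = 0 \<or> i - 1 \<notin> ?J" using assms by auto
  have shJ0: "shp ?J 1 n = shp ?J 1 (i - 1) @ True # shp ?J (i + 2) (n - i - 1)"
    using shapeA[OF assms(1,2) _ pre] by simp
  have l1: "shp ?J 1 (i - 1) = shp I 1 (i - 1)" by (rule shp_local) auto
  have l2: "shp ?J (i + 2) (n - i - 1) = shp I (i + 2) (n - i - 1)" by (rule shp_local) auto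
  have ci: "cap_I {i} n = tlist (rep (cd (tlist (gu (shp I 1 (i - 1))))) @ TCap #
      rep (cd (tlist (gu (shp I (i + 2) (n - i - 1))))))"
    using capi_shape[of i n] assms by simp
  show ?thesis unfolding TT_def cup_I_def cap_I_def[of I] cap_I_def[of ?J] cupx_shp capx_shp shI shJ0 l1 l2
    unfolding ci using caseC_gen[where K=K and L="shp I 1 (i - 1)" and R="shp I (i + 2) (n - i - 1)"] by simp
qed


lemma null_sum: "finite S \<Longrightarrow> (\<forall>x\<in>S. tl_null a b (f x)) \<Longrightarrow> tl_null a b (\<lambda>e. \<Sum>x\<in>S. (f x e :: 'k::field))"
proof (induct S rule: finite_induct)
  case empty
  then show ?case using tl_null.zero[of a b] by simp
next
  case (insert x F)
  then have "tl_null a b (\<lambda>e. f x e + (\<Sum>x\<in>F. f x e))" by (intro tl_null.add) auto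
  then show ?case using insert by simp
qed

lemma dm_TT: "dm (TT n i I) = n"
  by (simp add: TT_def cap_I_def capx_shp)

lemma cd_TT: "1 \<le> i \<Longrightarrow> i < n \<Longrightarrow> cd (TT n i I) = n - 2"
  by (simp add: TT_def capi_shape)

lemma apt_finite: "finite (apt n)"
  by (rule finite_subset[of _ "Pow {1..n}"]) (auto simp: apt_def)

lemma apt_fin_I: "I \<in> apt n \<Longrightarrow> finite I"
  by (auto simp: apt_def intro: finite_subset)

lemma lcomp_jn: "tl_lcomp (tl_single (cap_I {i} n)) (jn n :: _ \<Rightarrow> 'k::field) =
   (\<lambda>e. \<Sum>I\<in>apt n. if e = TT n i I then (-1) ^ card I else 0)"
proof (rule ext)
  fix e
  show "tl_lcomp (tl_single (cap_I {i} n)) (jn n :: _ \<Rightarrow> 'k::field) e =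
   (\<Sum>I\<in>apt n. if e = TT n i I then (-1) ^ card I else 0)"
  proof (cases e)
    case (TComp p q)
    then show ?thesis
      by (cases "p = cap_I {i} n") (simp_all add: tl_lcomp_def tl_single_def jn_def TT_def)
  qed (simp_all add: tl_lcomp_def TT_def)
qed

lemma first_conj:
  assumes "1 \<le> i" "i < n"
  shows "tl_null n (n - 2) (tl_lcomp (tl_single (cap_I {i} n)) (jn n :: _ \<Rightarrow> 'k::field))"
proof -
  define g :: "nat set \<Rightarrow> tl_expr \<Rightarrow> 'k" where
    "g I e = (if e = TT n i I then (-1) ^ card I else 0)" for I e
  define A where "A = {I\<in>apt n. i \<in> I}"
  define B where "B = {I\<in>apt n. i \<notin> I \<and> (i + 1 \<in> I \<or> (2 \<le> i \<and> i - 1 \<in> I))}"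
  define C where "C = {I\<in>apt n. i \<notin> I \<and> i + 1 \<notin> I \<and> \<not> (2 \<le> i \<and> i - 1 \<in> I)}"
  have fin: "finite A" "finite B" "finite C"
    unfolding A_def B_def C_def using apt_finite[of n] by auto
  have un: "apt n = A \<union> (B \<union> C)" unfolding A_def B_def C_def by auto
  have ins_apt: "insert i I \<in> apt n" if "I \<in> C" for I
  proof -
    from that have I: "I \<in> apt n" "i \<notin> I" "i + 1 \<notin> I" "\<not> (2 \<le> i \<and> i - 1 \<in> I)"
      unfolding C_def by auto
    from aptD[OF I(1)] have I2: "I \<subseteq> {1..n}" "n \<notin> I" "\<forall>j\<in>I. Suc j \<notin> I" by auto
    have "Suc j \<noteq> i" if "j \<in> I" for j
    proof
      assume "Suc j = i"
      moreover have "j \<ge> 1" using I2(1) that by auto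
      ultimately show False using I(4) that by auto
    qed
    then show ?thesis using I I2 assms unfolding apt_def by auto
  qed
  have AC: "A = insert i ` C"
  proof
    show "insert i ` C \<subseteq> A" using ins_apt unfolding A_def by auto
  next
    show "A \<subseteq> insert i ` C"
    proof
      fix I assume "I \<in> A"
      then have I: "I \<in> apt n" "i \<in> I" unfolding A_def by auto
      from aptD[OF I(1)] have I2: "I \<subseteq> {1..n}" "n \<notin> I" "\<forall>j\<in>I. Suc j \<notin> I" by auto
      have "I - {i} \<in> C"
      proof -
        have "I - {i} \<in> apt n" using I2 unfolding apt_def by auto
        moreover have "i + 1 \<notin> I" using I2 I by auto
        moreover have "\<not> (2 \<le> i \<and> i - 1 \<in> I)"
        proof
          assume "2 \<le> i \<and> i - 1 \<in> I"
          then have "Suc (i - 1) \<notin> I" using I2 by auto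
          then show False using I \<open>2 \<le> i \<and> i - 1 \<in> I\<close> by simp
        qed
        ultimately show ?thesis unfolding C_def by auto
      qed
      moreover have "I = insert i (I - {i})" using I by auto
      ultimately show "I \<in> insert i ` C" by blast
    qed
  qed
  have inj: "inj_on (insert i) C"
    unfolding inj_on_def C_def by (metis (no_types, lifting) Diff_insert_absorb mem_Collect_eq)
  have disj: "A \<inter> (B \<union> C) = {}" "B \<inter> C = {}" unfolding A_def B_def C_def by auto
  have eq: "(\<lambda>e. \<Sum>I\<in>apt n. g I e) = (\<lambda>e. (\<Sum>I\<in>B. g I e) + (\<Sum>I\<in>C. g I e + g (insert i I) e))"
  proof (rule ext)
    fix e
    have "(\<Sum>I\<in>apt n. g I e) = (\<Sum>I\<in>A. g I e) + ((\<Sum>I\<in>B. g I e) + (\<Sum>I\<in>C. g I e))"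
      unfolding un using fin disj by (simp add: sum.union_disjoint)
    also have "(\<Sum>I\<in>A. g I e) = (\<Sum>I\<in>C. g (insert i I) e)"
      unfolding AC using inj by (simp add: sum.reindex)
    finally show "(\<Sum>I\<in>apt n. g I e) = (\<Sum>I\<in>B. g I e) + (\<Sum>I\<in>C. g I e + g (insert i I) e)"
      by (simp add: sum.distrib)
  qed
  have nB: "tl_null n (n - 2) (g I)" if "I \<in> B" for I
  proof -
    from that have I: "I \<in> apt n" "i \<notin> I" "i + 1 \<in> I \<or> (2 \<le> i \<and> i - 1 \<in> I)"
      unfolding B_def by auto
    have "nul TYPE('k) (TT n i I)"
      using I caseB1[OF _ assms(2) I(1)] caseB2[OF assms I(1,2)] by auto
    then have "tl_null n (n - 2) (tl_single (TT n i I) :: _ \<Rightarrow> 'k)"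
      unfolding nul_def using dm_TT cd_TT[OF assms] by simp
    from tl_null.smult[OF this, of "(-1) ^ card I"] show ?thesis
      unfolding g_def by (rule null_cong) (auto simp: fun_eq_iff tl_single_def)
  qed
  have nC: "tl_null n (n - 2) (\<lambda>e. g I e + g (insert i I) e)" if "I \<in> C" for I
  proof -
    from that have I: "I \<in> apt n" "i \<notin> I" "i + 1 \<notin> I" "\<not> (2 \<le> i \<and> i - 1 \<in> I)"
      unfolding C_def by auto
    have pre: "i - 1 = 0 \<or> i - 1 \<notin> I" using I(4) by auto
    have "eqv TYPE('k) (TT n i I) (TT n i (insert i I))"
      using caseC[OF assms I(1,2,3) pre] .
    then have "tl_null n (n - 2) (\<lambda>x. tl_single (TT n i I) x - (tl_single (TT n i (insert i I)) x :: 'k))"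
      unfolding eqv_def using dm_TT cd_TT[OF assms] by simp
    have cI: "card (insert i I) = Suc (card I)" using apt_fin_I[OF I(1)] I(2) by simp
    show ?thesis
      by (rule null_cong[OF tl_null.smult[OF \<open>tl_null n (n - 2) _\<close>, of "(-1) ^ card I"]])
        (auto simp: fun_eq_iff tl_single_def g_def cI)
  qed
  have "tl_null n (n - 2) (\<lambda>e. (\<Sum>I\<in>B. g I e) + (\<Sum>I\<in>C. g I e + g (insert i I) e))"
    apply (rule tl_null.add)
    apply (rule null_sum[OF fin(2)]) using nB apply blast
    apply (rule null_sum[OF fin(3), where f = "\<lambda>I e. g I e + g (insert i I) e"]) using nC apply blast
    done
  then have "tl_null n (n - 2) (\<lambda>e. \<Sum>I\<in>apt n. g I e)" unfolding eq .
  then show ?thesis unfolding lcomp_jn g_def .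
qed


fun mir :: "tl_expr \<Rightarrow> tl_expr" where
  "mir (TId n) = TId n" | "mir TCup = TCap" | "mir TCap = TCup"
| "mir (TComp f g) = TComp (mir g) (mir f)" | "mir (TTens f g) = TTens (mir f) (mir g)"

lemma mir_mir[simp]: "mir (mir e) = e" by (induct e) auto

lemma mir_eq: "(mir x = y) = (x = mir y)" by auto

lemma single_mir: "(\<lambda>x. tl_single e (mir x)) = (tl_single (mir e) :: _ \<Rightarrow> 'k::field)"
  by (auto simp: fun_eq_iff tl_single_def mir_eq)

lemma wt_mir: "tl_wt e a b \<Longrightarrow> tl_wt (mir e) b a"
  by (induct rule: tl_wt.induct) (auto intro: tl_wt.intros)

lemma lcomp_mir: "(\<lambda>x. tl_lcomp u v (mir x)) = tl_lcomp (\<lambda>x. v (mir x)) (\<lambda>x. (u (mir x) :: 'k::field))"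
  by (rule ext, case_tac x) (simp_all add: tl_lcomp_def mult.commute)

lemma ltens_mir: "(\<lambda>x. tl_ltens u v (mir x)) = tl_ltens (\<lambda>x. u (mir x)) (\<lambda>x. (v (mir x) :: 'k::field))"
  by (rule ext, case_tac x) (simp_all add: tl_ltens_def)

lemma null_mir: "tl_null a b v \<Longrightarrow> tl_null b a (\<lambda>x. (v (mir x) :: 'k::field))"
proof (induct rule: tl_null.induct)
  case (zero a b) then show ?case by (simp add: tl_null.zero)
next
  case (add a b u v) then show ?case by (simp add: tl_null.add)
next
  case (smult a b v c) then show ?case by (simp add: tl_null.smult)
next
  case (comp_assoc h a b g c f d)
  have "tl_null d a (\<lambda>x. (-1) * (tl_single (TComp (TComp (mir h) (mir g)) (mir f)) x -
          (tl_single (TComp (mir h) (TComp (mir g) (mir f))) x :: 'k)))"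
    by (intro tl_null.smult tl_null.comp_assoc[OF wt_mir[OF comp_assoc(3)] wt_mir[OF comp_assoc(2)] wt_mir[OF comp_assoc(1)]])
  then show ?case by (rule null_cong) (auto simp: fun_eq_iff tl_single_def mir_eq)
next
  case (id_left f a b)
  show ?case using tl_null.id_right[OF wt_mir[OF id_left]]
    by (rule null_cong) (auto simp: fun_eq_iff tl_single_def mir_eq)
next
  case (id_right f a b)
  show ?case using tl_null.id_left[OF wt_mir[OF id_right]]
    by (rule null_cong) (auto simp: fun_eq_iff tl_single_def mir_eq)
next
  case (tens_assoc f a b g c d h e k)
  show ?case using tl_null.tens_assoc[OF wt_mir[OF tens_assoc(1)] wt_mir[OF tens_assoc(2)] wt_mir[OF tens_assoc(3)]]
    by (rule null_cong) (auto simp: fun_eq_iff tl_single_def mir_eq)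
next
  case (tens_unit_left f a b)
  show ?case using tl_null.tens_unit_left[OF wt_mir[OF tens_unit_left]]
    by (rule null_cong) (auto simp: fun_eq_iff tl_single_def mir_eq)
next
  case (tens_unit_right f a b)
  show ?case using tl_null.tens_unit_right[OF wt_mir[OF tens_unit_right]]
    by (rule null_cong) (auto simp: fun_eq_iff tl_single_def mir_eq)
next
  case (tens_id m n)
  show ?case using tl_null.tens_id[of m n]
    by (rule null_cong) (auto simp: fun_eq_iff tl_single_def mir_eq)
next
  case (interchange g a b f c k d e h l)
  show ?case using tl_null.interchange[OF wt_mir[OF interchange(2)] wt_mir[OF interchange(1)]
      wt_mir[OF interchange(4)] wt_mir[OF interchange(3)]]
    by (rule null_cong) (auto simp: fun_eq_iff tl_single_def mir_eq)
next
  case zigzag1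
  show ?case using tl_null.zigzag2
    by (rule null_cong) (auto simp: fun_eq_iff tl_single_def mir_eq)
next
  case zigzag2
  show ?case using tl_null.zigzag1
    by (rule null_cong) (auto simp: fun_eq_iff tl_single_def mir_eq)
next
  case circle
  show ?case using tl_null.circle
    by (rule null_cong) (auto simp: fun_eq_iff tl_single_def mir_eq)
next
  case (comp_left a b v f c)
  show ?case using tl_null.comp_right[OF comp_left(2) wt_mir[OF comp_left(3)]]
    by (simp add: lcomp_mir single_mir)
next
  case (comp_right a b v g c)
  show ?case using tl_null.comp_left[OF comp_right(2) wt_mir[OF comp_right(3)]]
    by (simp add: lcomp_mir single_mir)
next
  case (tens_left a b v f c d)
  show ?case using tl_null.tens_left[OF tens_left(2) wt_mir[OF tens_left(3)]]
    by (simp add: ltens_mir single_mir)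
next
  case (tens_right a b v f c d)
  show ?case using tl_null.tens_right[OF tens_right(2) wt_mir[OF tens_right(3)]]
    by (simp add: ltens_mir single_mir)
qed

lemma mir_capx: "mir (capx I k r) = cupx I k r"
  by (induct I k r rule: capx.induct) auto

lemma mir_cupx: "mir (cupx I k r) = capx I k r"
  by (induct I k r rule: cupx.induct) auto

lemma jn_mir: "(\<lambda>x. jn n (mir x)) = (jn n :: _ \<Rightarrow> 'k::field)"
  by (rule ext) (simp add: jn_def mir_eq cap_I_def cup_I_def mir_capx mir_cupx)

theorem mainTheorem6:
  fixes n i :: nat
  assumes "n \<ge> 1" and "1 \<le> i" and "i \<le> n - 1"
  shows "tl_null n (n - 2) (tl_lcomp (tl_single (cap_I {i} n)) (jn n :: tl_expr \<Rightarrow> 'k::field))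
       \<and> tl_null (n - 2) n (tl_lcomp (jn n :: tl_expr \<Rightarrow> 'k) (tl_single (cup_I {i} n)))"
proof -
  have i: "1 \<le> i" "i < n" using assms by auto
  have f: "tl_null n (n - 2) (tl_lcomp (tl_single (cap_I {i} n)) (jn n :: tl_expr \<Rightarrow> 'k::field))"
    using first_conj[OF i] .
  have "tl_null (n - 2) n (\<lambda>x. tl_lcomp (tl_single (cap_I {i} n)) (jn n :: tl_expr \<Rightarrow> 'k::field) (mir x))"
    using null_mir[OF f] .
  then have "tl_null (n - 2) n (tl_lcomp (jn n :: tl_expr \<Rightarrow> 'k) (tl_single (cup_I {i} n)))"
    by (simp add: lcomp_mir jn_mir single_mir cap_I_def cup_I_def mir_capx)
  with f show ?thesis by blast
qed

end
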